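(* Let $[X,d,m]$ be a metric random walk space with invariant and reversible measure $\nu$ under the standing assumptions below, let $\Omega\subset X$ be a bounded $\nu$-measurable set with $0<\nu(\Omega)<\nu(X)$, let $\psi\in L^\infty(\partial_m\Omega,\nu)$ and $p>1$. If $(m,\nu)$ satisfies a $p$-Poincaré inequality in $\Omega$, then there exists $u_p\in L^p(\Omega,\nu)$ such that $$-\int_{\Omega_m}|(u_p)_\psi(y)-u_p(x)|^{p-2}\big((u_p)_\psi(y)-u_p(x)\big)\,dm_x(y)=0\quad\text{for }\nu\text{-a.e. }x\in\Omega,$$ and moreover $\|u_p\|_{L^\infty(\Omega,\nu)}\le\|\psi\|_{L^\infty(\partial_m\Omega,\nu)}$.
   Context: A metric random walk space $[X,d,m]$ is a Polish metric space $(X,d)$ with a family $m=(m_x)_{x\in X}$ of Borel probability measures such that $x\mapsto m_x(A)$ is Borel measurable for every Borel $A$ and each $m_x$ has finite first moment. $\nu$ is invariant: $\nu(A)=\int_X m_x(A)\,d\nu(x)$ for all $\nu$-measurable $A$; reversible: $dm_x(y)\,d\nu(x)=dm_y(x)\,d\nu(y)$. Standing assumptions: $(X,d,\nu)$ is $\sigma$-finite, $\nu(X)<\infty$, $\nu$ ergodic (every Borel $B$ with $m_x(B)=1$ for all $x\in B$ has $\nu(B)\in\{0,\nu(X)\}$). $\partial_m\Omega:=\{x\in X\setminus\Omega: m_x(\Omega)>0\}$, $\Omega_m:=\Omega\cup\partial_m\Omega$. For $w:\Omega\to\mathbb{R}$, $w_\psi:\Omega_m\to\mathbb{R}$ equals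 $w$ on $\Omega$ and $\psi$ on $\partial_m\Omega$. For $q\ge1$, $(m,\nu)$ satisfies a $q$-Poincaré inequality in $\Omega$ if there is $\lambda>0$ such that $\lambda\int_\Omega|u(x)|^q\,d\nu(x)\le\int_\Omega\int_{\Omega_m}|u_\psi(y)-u(x)|^q\,dm_x(y)\,d\nu(x)+\int_{\partial_m\Omega}|\psi(y)|^q\,d\nu(y)$ for all $u\in L^q(\Omega,\nu)$ and all $\psi\in L^q(\partial_m\Omega,\nu)$. *)

theory Defs
  imports "HOL-Probability.Probability"
begin

text \<open>Metric random walk space [X,d,m] with X = UNIV of a Polish metric type 'a,
  d = dist, m x a Borel probability measure for each x.\<close>

definition mrw_space :: "('a::polish_space \<Rightarrow> 'a measure) \<Rightarrow> bool" where
  "mrw_space m \<longleftrightarrow>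
     (\<forall>x. prob_space (m x) \<and> sets (m x) = sets borel) \<and>
     (\<forall>A \<in> sets borel. (\<lambda>x. emeasure (m x) A) \<in> borel_measurable borel) \<and>
     (\<forall>x. (\<integral>\<^sup>+ y. ennreal (dist x y) \<partial>(m x)) < \<infinity>)"

definition invariant_measure :: "('a::polish_space \<Rightarrow> 'a measure) \<Rightarrow> 'a measure \<Rightarrow> bool" where
  "invariant_measure m \<nu> \<longleftrightarrow>
     (\<forall>A \<in> sets \<nu>. emeasure \<nu> A = (\<integral>\<^sup>+ x. emeasure (m x) A \<partial>\<nu>))"

text \<open>Reversibility: the measures dm_x(y) d\<nu>(x) and dm_y(x) d\<nu>(y) on X \<times> X coincide,
  i.e. they integrate every nonnegative Borel function on X \<times> X identically.\<close>
definition reversible_measure :: "('a::polish_space \<Rightarrow> 'a measure) \<Rightarrow> 'a measure \<Rightarrow> bool" where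
  "reversible_measure m \<nu> \<longleftrightarrow>
     (\<forall>f :: 'a \<times> 'a \<Rightarrow> ennreal. f \<in> borel_measurable borel \<longrightarrow>
        (\<integral>\<^sup>+ x. (\<integral>\<^sup>+ y. f (x, y) \<partial>(m x)) \<partial>\<nu>) = (\<integral>\<^sup>+ x. (\<integral>\<^sup>+ y. f (y, x) \<partial>(m x)) \<partial>\<nu>))"

definition ergodic_measure :: "('a::polish_space \<Rightarrow> 'a measure) \<Rightarrow> 'a measure \<Rightarrow> bool" where
  "ergodic_measure m \<nu> \<longleftrightarrow>
     (\<forall>B \<in> sets borel. (\<forall>x \<in> B. emeasure (m x) B = 1) \<longrightarrow>
        emeasure \<nu> B = 0 \<or> emeasure \<nu> B = emeasure \<nu> UNIV)"

definition m_boundary :: "('a \<Rightarrow> 'a measure) \<Rightarrow> 'a set \<Rightarrow> 'a set" where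
  "m_boundary m \<Omega> = {x. x \<notin> \<Omega> \<and> emeasure (m x) \<Omega> > 0}"

definition m_closure :: "('a \<Rightarrow> 'a measure) \<Rightarrow> 'a set \<Rightarrow> 'a set" where
  "m_closure m \<Omega> = \<Omega> \<union> m_boundary m \<Omega>"

text \<open>w_\<psi>: equal to w on \<Omega> and to \<psi> on the m-boundary (only values on \<Omega>_m matter).\<close>
definition ext_bd :: "'a set \<Rightarrow> ('a \<Rightarrow> real) \<Rightarrow> ('a \<Rightarrow> real) \<Rightarrow> 'a \<Rightarrow> real" where
  "ext_bd \<Omega> w \<psi> y = (if y \<in> \<Omega> then w y else \<psi> y)"

definition Lq_on :: "'a measure \<Rightarrow> 'a set \<Rightarrow> real \<Rightarrow> ('a \<Rightarrow> real) \<Rightarrow> bool" where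
  "Lq_on M A q f \<longleftrightarrow> f \<in> borel_measurable M \<and>
     (\<integral>\<^sup>+ x. indicator A x * ennreal (\<bar>f x\<bar> powr q) \<partial>M) < \<infinity>"

definition Linf_on :: "'a measure \<Rightarrow> 'a set \<Rightarrow> ('a \<Rightarrow> real) \<Rightarrow> bool" where
  "Linf_on M A f \<longleftrightarrow> f \<in> borel_measurable M \<and>
     (\<exists>C. AE x in M. x \<in> A \<longrightarrow> \<bar>f x\<bar> \<le> C)"

definition Linf_norm :: "'a measure \<Rightarrow> 'a set \<Rightarrow> ('a \<Rightarrow> real) \<Rightarrow> ereal" where
  "Linf_norm M A f = esssup M (\<lambda>x. if x \<in> A then ereal \<bar>f x\<bar> else 0)"

definition poincare_ineq :: "('a \<Rightarrow> 'a measure) \<Rightarrow> 'a measure \<Rightarrow> 'a set \<Rightarrow> real \<Rightarrow> bool" where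
  "poincare_ineq m \<nu> \<Omega> q \<longleftrightarrow>
     (\<exists>lam::real. lam > 0 \<and>
       (\<forall>u \<psi>. Lq_on \<nu> \<Omega> q u \<longrightarrow> Lq_on \<nu> (m_boundary m \<Omega>) q \<psi> \<longrightarrow>
          ennreal lam * (\<integral>\<^sup>+ x. indicator \<Omega> x * ennreal (\<bar>u x\<bar> powr q) \<partial>\<nu>)
          \<le> (\<integral>\<^sup>+ x. indicator \<Omega> x *
                (\<integral>\<^sup>+ y. indicator (m_closure m \<Omega>) y *
                    ennreal (\<bar>ext_bd \<Omega> u \<psi> y - u x\<bar> powr q) \<partial>(m x)) \<partial>\<nu>)
            + (\<integral>\<^sup>+ y. indicator (m_boundary m \<Omega>) y * ennreal (\<bar>\<psi> y\<bar> powr q) \<partial>\<nu>)))"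

end

theory Submission imports Defs begin

definition phi :: "real \<Rightarrow> real \<Rightarrow> real" where
  "phi p t = \<bar>t\<bar> powr (p - 2) * t"

lemma phi_alt:
  assumes "p > 1"
  shows "phi p t = (max t 0) powr (p - 1) - (max (- t) 0) powr (p - 1)"
proof (cases "t > 0")
  case True
  have "t powr (p - 2) * t = t powr (p - 2) * t powr 1" using True by simp
  also have "\<dots> = t powr ((p - 2) + 1)" using True by (simp only: powr_add)
  also have "\<dots> = t powr (p - 1)" by simp
  finally show ?thesis using True by (simp add: phi_def)
next
  case False
  show ?thesis
  proof (cases "t = 0")
    case True then show ?thesis by (simp add: phi_def)
  next
    case F: False
    with False have t: "t < 0" by simp
    have "(-t) powr (p - 2) * (-t) = (-t) powr (p - 2) * (-t) powr 1" using t by simp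
    also have "\<dots> = (-t) powr ((p - 2) + 1)" using t by (simp only: powr_add)
    also have "\<dots> = (-t) powr (p - 1)" by simp
    finally have "(-t) powr (p - 2) * t = - ((-t) powr (p - 1))" by simp
    then show ?thesis using t by (simp add: phi_def max_def)
  qed
qed

lemma phi_cont_on:
  assumes "p > 1"
  shows "continuous_on UNIV (phi p)"
proof -
  have "continuous_on UNIV (\<lambda>t. (max t 0) powr (p - 1) - (max (- t) 0) powr (p - 1))"
    using assms by (intro continuous_intros continuous_on_powr') auto
  then show ?thesis using phi_alt[OF assms] by simp
qed

lemma phi_isCont: "p > 1 \<Longrightarrow> isCont (phi p) t"
  using phi_cont_on continuous_on_eq_continuous_at by blast

lemma phi_meas[measurable]: "p > 1 \<Longrightarrow> phi p \<in> borel_measurable borel"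
  using phi_cont_on borel_measurable_continuous_onI by blast

lemma phi_mono:
  assumes "p > 1" "s \<le> t" shows "phi p s \<le> phi p t"
proof -
  have a: "(max s 0) powr (p - 1) \<le> (max t 0) powr (p - 1)"
    using assms by (intro powr_mono2) auto
  have b: "(max (-t) 0) powr (p - 1) \<le> (max (-s) 0) powr (p - 1)"
    using assms by (intro powr_mono2) auto
  show ?thesis using a b phi_alt[OF assms(1)] by simp
qed

lemma phi_zero[simp]: "phi p 0 = 0" by (simp add: phi_def)

lemma phi_nonneg: "p > 1 \<Longrightarrow> t \<ge> 0 \<Longrightarrow> phi p t \<ge> 0"
  using phi_mono[of p 0 t] by simp

lemma phi_nonpos: "p > 1 \<Longrightarrow> t \<le> 0 \<Longrightarrow> phi p t \<le> 0"
  using phi_mono[of p t 0] by simp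

lemma phi_bound:
  assumes "p > 1" "\<bar>t\<bar> \<le> B" shows "\<bar>phi p t\<bar> \<le> B powr (p - 1)"
proof -
  have "\<bar>phi p t\<bar> = \<bar>t\<bar> powr (p - 1)"
    using phi_alt[OF assms(1), of t] by (cases "t \<ge> 0") (auto simp: max_def)
  also have "\<dots> \<le> B powr (p - 1)" using assms by (intro powr_mono2) auto
  finally show ?thesis .
qed

lemma G_conv:
  fixes N :: "'a::topological_space measure"
  assumes N: "prob_space N" "sets N = sets borel" and K: "K \<in> sets borel" and p: "p > 1"
    and vsm: "\<And>n. vs n \<in> borel_measurable borel" and vm: "v \<in> borel_measurable borel"
    and vsb: "\<And>n y. \<bar>vs n y\<bar> \<le> M"
    and vl: "\<And>y. (\<lambda>n. vs n y) \<longlonglongrightarrow> v y" and cl: "cs \<longlonglongrightarrow> c"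
  shows "(\<lambda>n. \<integral>y. indicator K y * phi p (vs n y - cs n) \<partial>N)
           \<longlonglongrightarrow> (\<integral>y. indicator K y * phi p (v y - c) \<partial>N)"
proof -
  interpret prob_space N by (rule N(1))
  obtain B where B: "B > 0" "\<And>n. norm (cs n) \<le> B"
    using BseqE[OF convergent_imp_Bseq[OF convergentI[OF cl]]] by metis
  have bm: "borel_measurable N = borel_measurable borel"
    by (rule measurable_cong_sets) (simp_all add: N)
  have [measurable]: "K \<in> sets borel" by (rule K)
  note [measurable] = vsm vm phi_meas[OF p]
  show ?thesis
  proof (rule integral_dominated_convergence[where w="\<lambda>_. (M + B) powr (p - 1)"])
    show "(\<lambda>y. indicator K y * phi p (v y - c)) \<in> borel_measurable N"
      unfolding bm by measurable
    show "(\<lambda>y. indicator K y * phi p (vs n y - cs n)) \<in> borel_measurable N" for n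
      unfolding bm by measurable
    show "integrable N (\<lambda>_. (M + B) powr (p - 1))" by simp
    show "AE y in N. (\<lambda>n. indicator K y * phi p (vs n y - cs n)) \<longlonglongrightarrow> indicator K y * phi p (v y - c)"
      by (intro AE_I2 tendsto_mult_left isCont_tendsto_compose[OF phi_isCont[OF p]] tendsto_diff vl cl)
    show "AE y in N. norm (indicator K y * phi p (vs n y - cs n)) \<le> (M + B) powr (p - 1)" for n
    proof (intro AE_I2)
      fix y
      have "\<bar>vs n y - cs n\<bar> \<le> M + B" using vsb[of n y] B(2)[of n] by simp
      then have "\<bar>phi p (vs n y - cs n)\<bar> \<le> (M + B) powr (p - 1)" by (rule phi_bound[OF p])
      then show "norm (indicator K y * phi p (vs n y - cs n)) \<le> (M + B) powr (p - 1)"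
        by (auto simp: indicator_def)
    qed
  qed
qed

locale pset =
  fixes m :: "'a::polish_space \<Rightarrow> 'a measure" and K :: "'a set" and p :: real and M :: real
  assumes mP: "\<And>x. prob_space (m x)" and mS: "\<And>x. sets (m x) = sets borel"
    and mM: "\<And>A. A \<in> sets borel \<Longrightarrow> (\<lambda>x. emeasure (m x) A) \<in> borel_measurable borel"
    and K: "K \<in> sets borel" and p: "p > 1" and M: "M \<ge> 0"
begin

definition G :: "('a \<Rightarrow> real) \<Rightarrow> 'a \<Rightarrow> real \<Rightarrow> real" where
  "G v x c = (\<integral>y. indicator K y * phi p (v y - c) \<partial>(m x))"

definition fq :: "('a \<Rightarrow> real) \<Rightarrow> 'a \<Rightarrow> rat \<Rightarrow> real" where
  "fq v x q = (if - M \<le> real_of_rat q \<and> real_of_rat q \<le> M \<and> G v x (real_of_rat q) > 0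
      then real_of_rat q else - M)"

definition T :: "('a \<Rightarrow> real) \<Rightarrow> 'a \<Rightarrow> real" where
  "T v x = (SUP q. fq v x q)"

definition bnd :: "('a \<Rightarrow> real) \<Rightarrow> bool" where
  "bnd v \<longleftrightarrow> v \<in> borel_measurable borel \<and> (\<forall>y. \<bar>v y\<bar> \<le> M)"

lemma bm_m: "borel_measurable (m x) = borel_measurable borel"
  by (rule measurable_cong_sets) (simp_all add: mS)

lemma G_integrable:
  assumes "bnd v"
  shows "integrable (m x) (\<lambda>y. indicator K y * phi p (v y - c))"
proof -
  interpret prob_space "m x" by (rule mP)
  have [measurable]: "K \<in> sets borel" "v \<in> borel_measurable borel" using K assms by (auto simp: bnd_def)
  note [measurable] = phi_meas[OF p]
  show ?thesis
  proof (rule integrable_const_bound[where B="(M + \<bar>c\<bar>) powr (p - 1)"])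
    show "(\<lambda>y. indicator K y * phi p (v y - c)) \<in> borel_measurable (m x)"
      unfolding bm_m by measurable
    show "AE y in m x. norm (indicator K y * phi p (v y - c)) \<le> (M + \<bar>c\<bar>) powr (p - 1)"
    proof (intro AE_I2)
      fix y
      have "\<bar>v y\<bar> \<le> M" using assms by (simp add: bnd_def)
      then have "\<bar>v y - c\<bar> \<le> M + \<bar>c\<bar>" by linarith
      then have "\<bar>phi p (v y - c)\<bar> \<le> (M + \<bar>c\<bar>) powr (p - 1)" by (rule phi_bound[OF p])
      then show "norm (indicator K y * phi p (v y - c)) \<le> (M + \<bar>c\<bar>) powr (p - 1)"
        by (auto simp: indicator_def)
    qed
  qed
qed

lemma G_cont:
  assumes "bnd v" shows "isCont (G v x) c"
  unfolding continuous_at_sequentially comp_def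
proof (intro allI impI)
  fix cs assume "cs \<longlonglongrightarrow> c"
  then show "(\<lambda>n. G v x (cs n)) \<longlonglongrightarrow> G v x c"
    unfolding G_def using assms
    by (intro G_conv[where M=M] mP mS K p) (auto simp: bnd_def)
qed

lemma G_mono:
  assumes "bnd v" "bnd w" "\<And>y. v y \<le> w y"
  shows "G v x c \<le> G w x c"
  unfolding G_def
proof (rule integral_mono[OF G_integrable[OF assms(1)] G_integrable[OF assms(2)]])
  fix y show "indicator K y * phi p (v y - c) \<le> indicator K y * phi p (w y - c)"
    using phi_mono[OF p, of "v y - c" "w y - c"] assms(3)[of y] by (auto simp: indicator_def)
qed

lemma G_lo: assumes "bnd v" shows "G v x (- M) \<ge> 0"
  unfolding G_def
proof (rule integral_nonneg_AE, intro AE_I2)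
  fix y show "0 \<le> indicator K y * phi p (v y - - M)"
  proof -
    have "\<bar>v y\<bar> \<le> M" using assms by (simp add: bnd_def)
    then show ?thesis using phi_nonneg[OF p, of "v y + M"] by (auto simp: indicator_def)
  qed
qed

lemma G_hi: assumes "bnd v" shows "G v x M \<le> 0"
proof -
  have "0 \<le> (\<integral>y. - (indicator K y * phi p (v y - M)) \<partial>m x)"
  proof (rule integral_nonneg_AE, intro AE_I2)
    fix y show "0 \<le> - (indicator K y * phi p (v y - M))"
    proof -
      have "\<bar>v y\<bar> \<le> M" using assms by (simp add: bnd_def)
      then show ?thesis using phi_nonpos[OF p, of "v y - M"] by (auto simp: indicator_def)
    qed
  qed
  then show ?thesis unfolding G_def by simp
qed

lemma fq_bounds: "- M \<le> fq v x q" "fq v x q \<le> M"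
  using M by (auto simp: fq_def)

lemma fq_bdd: "bdd_above (range (fq v x))"
  using fq_bounds by (intro bdd_aboveI) blast

lemma T_bounds: "- M \<le> T v x" "T v x \<le> M"
  unfolding T_def
  using cSUP_upper[OF UNIV_I fq_bdd, of v x 0] fq_bounds[of v x 0]
  by (auto intro!: cSUP_least fq_bounds)

lemma fq_le_T: "fq v x q \<le> T v x"
  unfolding T_def by (rule cSUP_upper[OF UNIV_I fq_bdd])

lemma T_root:
  assumes v: "bnd v" shows "G v x (T v x) = 0"
proof -
  define c where "c = T v x"
  have cont: "isCont (G v x) c" by (rule G_cont[OF v])
  have ge: "G v x c \<ge> 0"
  proof (rule ccontr)
    assume "\<not> G v x c \<ge> 0"
    then have neg: "G v x c < 0" by simp
    from cont[unfolded isCont_def LIM_eq, rule_format, of "- G v x c"] neg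
    obtain d where d: "d > 0" "\<And>y. y \<noteq> c \<Longrightarrow> norm (y - c) < d \<Longrightarrow> norm (G v x y - G v x c) < - G v x c"
      by auto
    have dn: "\<And>y. \<bar>y - c\<bar> < d \<Longrightarrow> G v x y < 0"
    proof -
      fix y assume "\<bar>y - c\<bar> < d"
      then show "G v x y < 0" using d(2)[of y] neg by (cases "y = c") auto
    qed
    have "c - d < T v x" using d c_def by simp
    then obtain q where q: "c - d < fq v x q" unfolding T_def
      using less_cSUP_iff[OF _ fq_bdd] by blast
    have qc: "fq v x q \<le> c" using fq_le_T c_def by simp
    show False
    proof (cases "- M \<le> real_of_rat q \<and> real_of_rat q \<le> M \<and> G v x (real_of_rat q) > 0")
      case True
      then have "fq v x q = real_of_rat q" by (simp add: fq_def)
      then have "G v x (real_of_rat q) < 0" using dn[of "real_of_rat q"] q qc by auto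
      then show False using True by simp
    next
      case False
      then have "fq v x q = - M" unfolding fq_def by (rule if_not_P)
      then have "G v x (- M) < 0" using dn[of "- M"] q qc by auto
      then show False using G_lo[OF v, of x] by simp
    qed
  qed
  have le: "G v x c \<le> 0"
  proof (rule ccontr)
    assume "\<not> G v x c \<le> 0"
    then have pos: "G v x c > 0" by simp
    have cM: "c < M" using T_bounds[of v x] G_hi[OF v, of x] pos c_def
      by (cases "c = M") auto
    from cont[unfolded isCont_def LIM_eq, rule_format, of "G v x c"] pos
    obtain d where d: "d > 0" "\<And>y. y \<noteq> c \<Longrightarrow> norm (y - c) < d \<Longrightarrow> norm (G v x y - G v x c) < G v x c"
      by auto
    have dp: "\<And>y. \<bar>y - c\<bar> < d \<Longrightarrow> G v x y > 0"
    proof -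
      fix y assume "\<bar>y - c\<bar> < d"
      then show "G v x y > 0" using d(2)[of y] pos by (cases "y = c") auto
    qed
    obtain r where r: "r \<in> \<rat>" "c < r" "r < min (c + d) M"
      using Rats_dense_in_real[of c "min (c + d) M"] cM d(1) by auto
    then obtain q where rq: "r = real_of_rat q" using Rats_cases by blast
    have "- M \<le> r" using T_bounds[of v x] c_def r by simp
    moreover have "G v x r > 0" using dp[of r] r by auto
    ultimately have "fq v x q = r" using r rq by (simp add: fq_def)
    then show False using fq_le_T[of v x q] c_def r by simp
  qed
  show ?thesis using ge le c_def by simp
qed

lemma T_mono:
  assumes "bnd v" "bnd w" "\<And>y. v y \<le> w y"
  shows "T v x \<le> T w x"
  unfolding T_def
proof (rule cSUP_mono[OF _ fq_bdd])
  fix q show "\<exists>q'\<in>UNIV. fq v x q \<le> fq w x q'"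
  proof (intro bexI[of _ q])
    have "G v x (real_of_rat q) \<le> G w x (real_of_rat q)" by (rule G_mono[OF assms])
    then show "fq v x q \<le> fq w x q" by (auto simp: fq_def)
  qed simp
qed simp

lemma kernel: "m \<in> borel \<rightarrow>\<^sub>M subprob_algebra borel"
  by (rule measurable_subprob_algebra) (auto simp: mS mM prob_space_imp_subprob_space mP)

lemma G_meas:
  assumes "bnd v" shows "(\<lambda>x. G v x c) \<in> borel_measurable borel"
proof -
  have [measurable]: "K \<in> sets borel" "v \<in> borel_measurable borel" using K assms by (auto simp: bnd_def)
  note [measurable] = phi_meas[OF p]
  have "(\<lambda>y. indicator K y * phi p (v y - c)) \<in> borel_measurable borel" by measurable
  from measurable_compose[OF kernel integral_measurable_subprob_algebra[OF this]]
  show ?thesis unfolding G_def by (simp add: comp_def)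
qed

lemma T_meas:
  assumes "bnd v" shows "T v \<in> borel_measurable borel"
proof -
  have [measurable]: "(\<lambda>x. G v x c) \<in> borel_measurable borel" for c by (rule G_meas[OF assms])
  have [measurable]: "(\<lambda>x. fq v x q) \<in> borel_measurable borel" for q
    unfolding fq_def by measurable
  show ?thesis unfolding T_def
    by (rule borel_measurable_cSUP) (auto intro: fq_bdd)
qed

lemma T_bnd: "bnd v \<Longrightarrow> bnd (T v)"
proof -
  assume "bnd v"
  moreover have "\<bar>T v y\<bar> \<le> M" for y using T_bounds[of v y] by linarith
  ultimately show "bnd (T v)" using T_meas by (auto simp: bnd_def)
qed

lemma ext_bnd:
  assumes Om: "Om \<in> sets borel" and "bnd u" "bnd \<psi>" shows "bnd (ext_bd Om u \<psi>)"
proof -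
  have [measurable]: "Om \<in> sets borel" "u \<in> borel_measurable borel" "\<psi> \<in> borel_measurable borel"
    using assms by (auto simp: bnd_def)
  have "ext_bd Om u \<psi> \<in> borel_measurable borel"
    unfolding ext_bd_def[abs_def] by measurable
  then show ?thesis using assms by (auto simp: bnd_def ext_bd_def)
qed

lemma fixed_point:
  assumes Om: "Om \<in> sets borel" and psi: "bnd \<psi>"
  shows "\<exists>u. bnd u \<and> (\<forall>x. G (ext_bd Om u \<psi>) x (u x) = 0)"
proof -
  define F where "F u = T (ext_bd Om u \<psi>)" for u
  define U where "U n = (F ^^ n) (\<lambda>_. - M)" for n
  have U0: "U 0 = (\<lambda>_. - M)" and US: "U (Suc n) = T (ext_bd Om (U n) \<psi>)" for n
    by (simp_all add: U_def F_def)
  have Ub: "bnd (U n)" for n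
  proof (induction n)
    case 0
    have "(\<lambda>_::'a. - M) \<in> borel_measurable borel" by simp
    then show ?case using M by (simp add: U0 bnd_def)
  next
    case (Suc n)
    then show ?case unfolding US by (intro T_bnd ext_bnd Om psi)
  qed
  have Uinc: "U n x \<le> U (Suc n) x" for n x
  proof (induction n arbitrary: x)
    case 0
    then show ?case unfolding US U0 using T_bounds by simp
  next
    case (Suc n)
    have "T (ext_bd Om (U n) \<psi>) x \<le> T (ext_bd Om (U (Suc n)) \<psi>) x"
    proof (rule T_mono[OF ext_bnd[OF Om Ub psi] ext_bnd[OF Om Ub psi]])
      fix y show "ext_bd Om (U n) \<psi> y \<le> ext_bd Om (U (Suc n)) \<psi> y"
        using Suc by (simp add: ext_bd_def)
    qed
    then show ?case using US[of n] US[of "Suc n"] by simp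
  qed
  have Ubd: "\<bar>U n x\<bar> \<le> M" for n x using Ub[of n] by (simp add: bnd_def)
  define us where "us x = (SUP n. U n x)" for x
  have bdd: "bdd_above (range (\<lambda>n. U n x))" for x
    using Ubd by (intro bdd_aboveI[where M=M]) (auto simp: abs_le_iff)
  have lim: "(\<lambda>n. U n x) \<longlonglongrightarrow> us x" for x
    unfolding us_def by (rule LIMSEQ_incseq_SUP[OF bdd]) (simp add: incseq_SucI Uinc)
  have usb: "\<bar>us x\<bar> \<le> M" for x
  proof -
    have "U 0 x \<le> us x" unfolding us_def by (rule cSUP_upper[OF UNIV_I bdd])
    moreover have "us x \<le> M" unfolding us_def
      using Ubd by (intro cSUP_least) (auto simp: abs_le_iff)
    ultimately show ?thesis by (simp add: U0)
  qed
  have usm: "us \<in> borel_measurable borel"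
    by (rule borel_measurable_LIMSEQ_real[OF lim]) (use Ub in \<open>auto simp: bnd_def\<close>)
  have usbnd: "bnd us" using usb usm by (simp add: bnd_def)
  have "G (ext_bd Om us \<psi>) x (us x) = 0" for x
  proof -
    have "(\<lambda>n. G (ext_bd Om (U n) \<psi>) x (U (Suc n) x)) \<longlonglongrightarrow> G (ext_bd Om us \<psi>) x (us x)"
      unfolding G_def
    proof (rule G_conv[where M=M, OF mP mS K p])
      show "ext_bd Om (U n) \<psi> \<in> borel_measurable borel" for n
        using ext_bnd[OF Om Ub psi] by (simp add: bnd_def)
      show "ext_bd Om us \<psi> \<in> borel_measurable borel"
        using ext_bnd[OF Om usbnd psi] by (simp add: bnd_def)
      show "\<bar>ext_bd Om (U n) \<psi> y\<bar> \<le> M" for n y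
        using ext_bnd[OF Om Ub psi] by (simp add: bnd_def)
      show "(\<lambda>n. ext_bd Om (U n) \<psi> y) \<longlonglongrightarrow> ext_bd Om us \<psi> y" for y
        by (cases "y \<in> Om") (simp_all add: ext_bd_def lim)
      show "(\<lambda>n. U (Suc n) x) \<longlonglongrightarrow> us x"
        using lim[of x] by (rule LIMSEQ_Suc)
    qed
    moreover have "G (ext_bd Om (U n) \<psi>) x (U (Suc n) x) = 0" for n
      unfolding US by (rule T_root[OF ext_bnd[OF Om Ub psi]])
    ultimately have "(\<lambda>n. 0) \<longlonglongrightarrow> G (ext_bd Om us \<psi>) x (us x)" by simp
    then show ?thesis using LIMSEQ_unique tendsto_const by metis
  qed
  then show ?thesis using usbnd by blast
qed

end

theorem mainTheorem5:
  fixes m :: "'a::polish_space \<Rightarrow> 'a measure" and \<nu> :: "'a measure"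
    and \<Omega> :: "'a set" and \<psi> :: "'a \<Rightarrow> real" and p :: real
  assumes "mrw_space m"
    and "sets \<nu> = sets borel"
    and "invariant_measure m \<nu>" and "reversible_measure m \<nu>"
    and "sigma_finite_measure \<nu>" and "emeasure \<nu> UNIV < \<infinity>"
    and "ergodic_measure m \<nu>"
    and "bounded \<Omega>" and "\<Omega> \<in> sets \<nu>"
    and "0 < emeasure \<nu> \<Omega>" and "emeasure \<nu> \<Omega> < emeasure \<nu> UNIV"
    and "Linf_on \<nu> (m_boundary m \<Omega>) \<psi>"
    and "p > 1"
    and "poincare_ineq m \<nu> \<Omega> p"
  shows "\<exists>u. Lq_on \<nu> \<Omega> p u \<and>
     (AE x in \<nu>. x \<in> \<Omega> \<longrightarrow>
        integrable (m x) (\<lambda>y. indicator (m_closure m \<Omega>) y *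
           (\<bar>ext_bd \<Omega> u \<psi> y - u x\<bar> powr (p - 2) * (ext_bd \<Omega> u \<psi> y - u x))) \<and>
        - (\<integral>y. indicator (m_closure m \<Omega>) y *
           (\<bar>ext_bd \<Omega> u \<psi> y - u x\<bar> powr (p - 2) * (ext_bd \<Omega> u \<psi> y - u x)) \<partial>(m x)) = 0) \<and>
     Linf_norm \<nu> \<Omega> u \<le> Linf_norm \<nu> (m_boundary m \<Omega>) \<psi>"
proof -
  note A = assms
  have mP: "\<And>x. prob_space (m x)" and mS: "\<And>x. sets (m x) = sets borel"
    and mM: "\<And>A. A \<in> sets borel \<Longrightarrow> (\<lambda>x. emeasure (m x) A) \<in> borel_measurable borel"
    using A(1) by (auto simp: mrw_space_def)
  have sp: "space \<nu> = UNIV" using A(2) sets_eq_imp_space_eq by fastforce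
  have bmn: "borel_measurable \<nu> = borel_measurable borel"
    by (rule measurable_cong_sets) (simp_all add: A(2))
  have Om[measurable]: "\<Omega> \<in> sets borel" using A(9) A(2) by simp
  have mMO[measurable]: "(\<lambda>x. emeasure (m x) \<Omega>) \<in> borel_measurable borel" by (rule mM[OF Om])
  define B where "B = m_boundary m \<Omega>"
  define K where "K = m_closure m \<Omega>"
  have Bm[measurable]: "B \<in> sets borel" unfolding B_def m_boundary_def by measurable
  have Km[measurable]: "K \<in> sets borel" unfolding K_def m_closure_def B_def[symmetric] by measurable
  have psim[measurable]: "\<psi> \<in> borel_measurable borel" using A(12) bmn by (auto simp: Linf_on_def)
  obtain C where C: "AE x in \<nu>. x \<in> B \<longrightarrow> \<bar>\<psi> x\<bar> \<le> C" using A(12) by (auto simp: Linf_on_def B_def)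
  define L where "L = Linf_norm \<nu> B \<psi>"
  have nz: "emeasure \<nu> (space \<nu>) \<noteq> 0" using A(10) A(11) sp by auto
  have L0: "0 \<le> L"
  proof -
    have "esssup \<nu> (\<lambda>x. 0::ereal) \<le> L" unfolding L_def Linf_norm_def
      by (rule esssup_mono) auto
    then show ?thesis using esssup_const[OF nz, of "0::ereal"] by simp
  qed
  define M where "M = (if L = \<infinity> then max 0 C else real_of_ereal L)"
  have M0: "M \<ge> 0" using L0 by (auto simp: M_def real_of_ereal_pos)
  have psiM: "AE x in \<nu>. x \<in> B \<longrightarrow> \<bar>\<psi> x\<bar> \<le> M"
  proof (cases "L = \<infinity>")
    case True
    then have CM: "C \<le> M" by (simp add: M_def)
    show ?thesis using C by (rule eventually_mono) (use CM in auto)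
  next
    case False
    then have LM: "L = ereal M" using L0 by (cases L) (auto simp: M_def)
    have "AE x in \<nu>. (if x \<in> B then ereal \<bar>\<psi> x\<bar> else 0) \<le> L"
      unfolding L_def Linf_norm_def by (rule esssup_AE)
    then show ?thesis unfolding LM by (rule eventually_mono) (auto split: if_splits)
  qed
  have Lbound: "Linf_norm \<nu> \<Omega> u \<le> L" if "u \<in> borel_measurable borel" "\<And>x. \<bar>u x\<bar> \<le> M" for u
  proof (cases "L = \<infinity>")
    case True then show ?thesis by simp
  next
    case False
    then have LM: "L = ereal M" using L0 by (cases L) (auto simp: M_def)
    have [measurable]: "u \<in> borel_measurable borel" by fact
    show ?thesis unfolding Linf_norm_def LM
    proof (rule esssup_I)
      show "(\<lambda>x. if x \<in> \<Omega> then ereal \<bar>u x\<bar> else 0) \<in> borel_measurable \<nu>"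
        unfolding bmn by measurable
      show "AE x in \<nu>. (if x \<in> \<Omega> then ereal \<bar>u x\<bar> else 0) \<le> ereal M"
        using that(2) M0 by auto
    qed
  qed
  define \<psi>' where "\<psi>' y = max (- M) (min M (\<psi> y))" for y
  interpret pset m K p M by (rule pset.intro[OF mP mS mM Km A(13) M0])
  have psib: "bnd \<psi>'"
  proof -
    have "\<psi>' \<in> borel_measurable borel" unfolding \<psi>'_def[abs_def] by measurable
    then show ?thesis using M0 by (auto simp: bnd_def \<psi>'_def)
  qed
  obtain u where ub: "bnd u" and ueq: "\<And>x. G (ext_bd \<Omega> u \<psi>') x (u x) = 0"
    using fixed_point[OF Om psib] by blast
  have um[measurable]: "u \<in> borel_measurable borel" and uM: "\<And>x. \<bar>u x\<bar> \<le> M"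
    using ub by (auto simp: bnd_def)
  have Lq: "Lq_on \<nu> \<Omega> p u"
  proof -
    have "(\<integral>\<^sup>+ x. indicator \<Omega> x * ennreal (\<bar>u x\<bar> powr p) \<partial>\<nu>) \<le> (\<integral>\<^sup>+ x. ennreal (M powr p) \<partial>\<nu>)"
    proof (rule nn_integral_mono)
      fix x
      have "\<bar>u x\<bar> powr p \<le> M powr p" using uM[of x] A(13) by (intro powr_mono2) auto
      then show "indicator \<Omega> x * ennreal (\<bar>u x\<bar> powr p) \<le> ennreal (M powr p)"
        by (auto simp: indicator_def ennreal_leI)
    qed
    also have "\<dots> = ennreal (M powr p) * emeasure \<nu> UNIV" using sp by simp
    also have "\<dots> < \<infinity>" using A(6) by (simp add: ennreal_mult_less_top)
    finally show ?thesis unfolding Lq_on_def bmn using um by simp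
  qed
  define N where "N = {y. y \<in> B \<and> M < \<bar>\<psi> y\<bar>}"
  have Nm[measurable]: "N \<in> sets borel" unfolding N_def by measurable
  have N0: "emeasure \<nu> N = 0"
    using psiM by (subst (asm) AE_iff_measurable[where N=N]) (auto simp: N_def sp A(2))
  have "(\<integral>\<^sup>+ x. emeasure (m x) N \<partial>\<nu>) = 0"
    using A(3) N0 A(2) by (auto simp: invariant_measure_def)
  then have aeN: "AE x in \<nu>. emeasure (m x) N = 0"
    using mM[OF Nm] bmn by (subst (asm) nn_integral_0_iff_AE) auto
  have main: "AE x in \<nu>. x \<in> \<Omega> \<longrightarrow>
        integrable (m x) (\<lambda>y. indicator (m_closure m \<Omega>) y *
           (\<bar>ext_bd \<Omega> u \<psi> y - u x\<bar> powr (p - 2) * (ext_bd \<Omega> u \<psi> y - u x))) \<and>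
        - (\<integral>y. indicator (m_closure m \<Omega>) y *
           (\<bar>ext_bd \<Omega> u \<psi> y - u x\<bar> powr (p - 2) * (ext_bd \<Omega> u \<psi> y - u x)) \<partial>(m x)) = 0"
    using aeN
  proof (eventually_elim, intro impI)
    fix x assume mN: "emeasure (m x) N = 0" and "x \<in> \<Omega>"
    have bmm: "borel_measurable (m x) = borel_measurable borel"
      by (rule measurable_cong_sets) (simp_all add: mS)
    have NN: "N \<in> null_sets (m x)" using mN mS by (auto simp: null_sets_def)
    define f where "f y = indicator K y * (\<bar>ext_bd \<Omega> u \<psi> y - u x\<bar> powr (p - 2) * (ext_bd \<Omega> u \<psi> y - u x))" for y
    define g where "g y = indicator K y * phi p (ext_bd \<Omega> u \<psi>' y - u x)" for y
    have fm: "f \<in> borel_measurable (m x)" unfolding bmm f_def[abs_def] ext_bd_def[abs_def] by measurable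
    have gi: "integrable (m x) g" unfolding g_def[abs_def]
      by (rule G_integrable[OF ext_bnd[OF Om ub psib]])
    have gm: "g \<in> borel_measurable (m x)" using gi by (rule borel_measurable_integrable)
    have fg: "AE y in m x. f y = g y"
      using AE_not_in[OF NN]
    proof eventually_elim
      fix y assume "y \<notin> N"
      then show "f y = g y"
        by (cases "y \<in> \<Omega>"; cases "y \<in> K")
           (auto simp: f_def g_def phi_def ext_bd_def N_def K_def m_closure_def B_def \<psi>'_def)
    qed
    have "integrable (m x) f" using integrable_cong_AE[OF fm gm fg] gi by simp
    moreover have "integral\<^sup>L (m x) f = 0"
      using integral_cong_AE[OF fm gm fg] ueq[of x] by (simp add: G_def g_def[abs_def])
    ultimately show "integrable (m x) (\<lambda>y. indicator (m_closure m \<Omega>) y *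
           (\<bar>ext_bd \<Omega> u \<psi> y - u x\<bar> powr (p - 2) * (ext_bd \<Omega> u \<psi> y - u x))) \<and>
        - (\<integral>y. indicator (m_closure m \<Omega>) y *
           (\<bar>ext_bd \<Omega> u \<psi> y - u x\<bar> powr (p - 2) * (ext_bd \<Omega> u \<psi> y - u x)) \<partial>(m x)) = 0"
      by (simp add: f_def[abs_def] K_def)
  qed
  show ?thesis
    using Lq main Lbound[OF um uM] by (auto simp: L_def B_def)
qed

end
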